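(* Consider two $K$-tier networks as described in the context, identical (same point processes $\Phi_k$, powers $P_k$, path loss exponent, per-user resources $\mathcal{O}_k$ and target rates $T_k$) except that the first has channel parameters $\{\Delta_k\},\{\Psi_k\}$ and the second $\{\Delta'_k\},\{\Psi'_k\}$. Suppose $\Psi_k\le\Psi'_k$ for all $k\in\mathcal{K}$. (a) Open access: if in addition $\Delta_k\ge\Delta'_k$ for all $k\in\mathcal{K}$, then the open access rate coverage of the first network is greater than or equal to that of the second. (b) Closed access with accessible tiers $\mathcal{B}\subset\mathcal{K}$: if in addition $\Delta_k\ge\Delta'_k$ for all $k\in\mathcal{B}$, then the closed access rate coverage of the first network is greater than or equal to that of the second.
   Context: Downlink $K$-tier cellular network with tiers indexed by $\mathcal{K}=\{1,\dots,K\}$. Tier-$k$ base stations (BSs) are located at the points of a stationary point process $\Phi_k\subset\mathbb{R}^2$ (not necessarily independent across tiers) and transmit with per-user power $P_k>0$; each tier has positive integer channel parameters $\Delta_k,\Psi_k$. $\alpha$ is the path loss exponent; a typical user is at the origin. Each BS at $x\in\Phi_k$ carries channel-power marks $h_{kx}\sim\Gamma(\Delta_k,1)$ (desired link) and $g_{kx}\sim\Gamma(\Psi_k,1)$ (interfering link), all mutually independent and independent of the point processes. $\mathrm{SIR}(x_k)=\dfrac{P_kh_{kx_k}\|x_k\|^{-\alpha}}{\sum_{j\in\mathcal{K}}\sum_{y\in\Phi_j\setminus\{x_k\}}P_jg_{jy}\|y\|^{-\alpha}}$ for $x_k\in\Phi_k$. Each user served by a tier-$k$ BS receives a fixed amount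 $\mathcal{O}_k>0$ of time-frequency resources, so its rate is $\mathcal{O}_k\log_2(1+\mathrm{SIR}(x_k))$; $T_k>0$ is the tier-$k$ target rate. The open access rate coverage is $\mathbb{P}\big(\bigcup_{k\in\mathcal{K}}\{\max_{x_k\in\Phi_k}\mathcal{O}_k\log_2(1+\mathrm{SIR}(x_k))>T_k\}\big)$; the closed access rate coverage with accessible tier set $\mathcal{B}\subset\mathcal{K}$ is the same with the union over $k\in\mathcal{B}$. $\Gamma(a,1)$ is the Gamma distribution with shape $a$, scale $1$. *)

theory Defs
  imports "HOL-Probability.Probability"
begin

(* A realization of the K-tier point process: for every tier k a number of
   points N k (possibly infinite) and an enumeration X k n (n < N k) of the
   tier-k base station locations in R^2. *)
type_synonym config = "(nat \<Rightarrow> enat) \<times> (nat \<Rightarrow> nat \<Rightarrow> real^2)"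

definition config_space :: "config measure" where
  "config_space = PiM UNIV (\<lambda>k. count_space UNIV) \<Otimes>\<^sub>M PiM UNIV (\<lambda>k. PiM UNIV (\<lambda>n. borel))"

definition pp_count :: "config \<Rightarrow> nat \<Rightarrow> (real^2) set \<Rightarrow> enat" where
  "pp_count c k B = (let S = {n. enat n < fst c k \<and> snd c k n \<in> B} in
                     if finite S then enat (card S) else \<infinity>)"

definition point_process :: "nat \<Rightarrow> config measure \<Rightarrow> bool" where
  "point_process K Q \<longleftrightarrow> prob_space Q \<and> sets Q = sets config_space \<and>
     (AE c in Q. \<forall>k\<in>{1..K}. inj_on (snd c k) {n. enat n < fst c k} \<and>
        (\<forall>B. bounded B \<longrightarrow> finite {n. enat n < fst c k \<and> snd c k n \<in> B}))"

definition stationary_pp :: "nat \<Rightarrow> config measure \<Rightarrow> bool" where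
  "stationary_pp K Q \<longleftrightarrow>
     (\<forall>(a::real^2) (m::nat) (ks::nat \<Rightarrow> nat) (Bs::nat \<Rightarrow> (real^2) set) (cs::nat \<Rightarrow> enat).
        (\<forall>i<m. ks i \<in> {1..K} \<and> Bs i \<in> sets borel \<and> bounded (Bs i)) \<longrightarrow>
        emeasure Q {c \<in> space Q. \<forall>i<m. pp_count c (ks i) ((\<lambda>x. x + a) ` Bs i) = cs i}
        = emeasure Q {c \<in> space Q. \<forall>i<m. pp_count c (ks i) (Bs i) = cs i})"

(* Gamma(a,1) distribution for positive integer shape a (= Erlang with shape a, rate 1) *)
definition gamma_measure :: "nat \<Rightarrow> real measure" where
  "gamma_measure a = density lborel (\<lambda>x. ennreal (erlang_density (a - 1) 1 x))"

(* i.i.d.-per-tier marks: the mark of the n-th point of tier k is coordinate (k,n) *)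
definition marks_law :: "(nat \<Rightarrow> nat) \<Rightarrow> (nat \<times> nat \<Rightarrow> real) measure" where
  "marks_law a = PiM UNIV (\<lambda>(k, n). gamma_measure (a k))"

(* joint law: point process, desired-link marks h, interfering-link marks g, all independent *)
definition network_measure ::
  "config measure \<Rightarrow> (nat \<Rightarrow> nat) \<Rightarrow> (nat \<Rightarrow> nat) \<Rightarrow> (config \<times> (nat \<times> nat \<Rightarrow> real) \<times> (nat \<times> nat \<Rightarrow> real)) measure" where
  "network_measure Q Delta Psi = Q \<Otimes>\<^sub>M (marks_law Delta \<Otimes>\<^sub>M marks_law Psi)"

(* SIR of the n-th tier-k BS; interference is summed over all other BSs of tiers 1..K
   (an ennreal, possibly infinite); ennreal division: s/0 = \<infinity> for s > 0, s/\<infinity> = 0 *)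
definition SIR :: "nat \<Rightarrow> real \<Rightarrow> (nat \<Rightarrow> real) \<Rightarrow> config \<Rightarrow> (nat \<times> nat \<Rightarrow> real)
                   \<Rightarrow> (nat \<times> nat \<Rightarrow> real) \<Rightarrow> nat \<Rightarrow> nat \<Rightarrow> ennreal" where
  "SIR K \<alpha> P c h g k n =
     ennreal (P k * h (k, n) * norm (snd c k n) powr (- \<alpha>)) /
     (\<Sum>j\<in>{1..K}. \<Sum>m. ennreal (if enat m < fst c j \<and> (j, m) \<noteq> (k, n)
                                   then P j * g (j, m) * norm (snd c j m) powr (- \<alpha>) else 0))"

definition rate_exceeds :: "real \<Rightarrow> real \<Rightarrow> ennreal \<Rightarrow> bool" where
  "rate_exceeds Ores T s \<longleftrightarrow> s = \<top> \<or> Ores * log 2 (1 + enn2real s) > T"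

definition rate_coverage :: "nat \<Rightarrow> real \<Rightarrow> (nat \<Rightarrow> real) \<Rightarrow> (nat \<Rightarrow> real) \<Rightarrow> (nat \<Rightarrow> real)
       \<Rightarrow> nat set \<Rightarrow> config measure \<Rightarrow> (nat \<Rightarrow> nat) \<Rightarrow> (nat \<Rightarrow> nat) \<Rightarrow> real" where
  "rate_coverage K \<alpha> P Ores T A Q Delta Psi =
     measure (network_measure Q Delta Psi)
       {\<omega> \<in> space (network_measure Q Delta Psi).
          \<exists>k\<in>A. \<exists>n. enat n < fst (fst \<omega>) k \<and>
             rate_exceeds (Ores k) (T k) (SIR K \<alpha> P (fst \<omega>) (fst (snd \<omega>)) (snd (snd \<omega>)) k n)}"

definition open_rate_coverage where
  "open_rate_coverage K \<alpha> P Ores T Q Delta Psi = rate_coverage K \<alpha> P Ores T {1..K} Q Delta Psi"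

definition closed_rate_coverage where
  "closed_rate_coverage K \<alpha> P Ores T B Q Delta Psi = rate_coverage K \<alpha> P Ores T B Q Delta Psi"

end

theory Submission
  imports Defs
begin


lemma distr_PiM_map:
  fixes R :: "'i \<Rightarrow> 'a measure" and N :: "'i \<Rightarrow> 'b measure"
  assumes R: "\<And>i. i \<in> I \<Longrightarrow> prob_space (R i)"
  assumes f: "\<And>i. i \<in> I \<Longrightarrow> f i \<in> measurable (R i) (N i)"
  shows "distr (PiM I R) (PiM I (\<lambda>i. distr (R i) (N i) (f i))) (\<lambda>\<omega>. \<lambda>i\<in>I. f i (\<omega> i))
       = PiM I (\<lambda>i. distr (R i) (N i) (f i))"
    (is "distr ?R ?M ?t = ?M")
proof (rule measure_eqI_PiM_infinite[symmetric, OF refl])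
  interpret prob_space ?M
    using R f by (intro prob_space_PiM prob_space.prob_space_distr) auto
  show "finite_measure ?M" by unfold_locales
  have tm: "?t \<in> measurable ?R ?M"
  proof (rule measurable_PiM_single')
    fix i assume i: "i \<in> I"
    have "(\<lambda>\<omega>. f i (\<omega> i)) \<in> measurable ?R (N i)"
      using f[OF i] i by (intro measurable_compose[OF measurable_component_singleton]) auto
    then show "(\<lambda>\<omega>. (\<lambda>i\<in>I. f i (\<omega> i)) i) \<in> measurable ?R (distr (R i) (N i) (f i))"
      using i by simp
  next
    show "(\<lambda>\<omega>. \<lambda>i\<in>I. f i (\<omega> i)) \<in> space ?R \<rightarrow> (\<Pi>\<^sub>E i\<in>I. space (distr (R i) (N i) (f i)))"
      using f by (auto simp: space_PiM PiE_iff intro: measurable_space)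
  qed
  then show "sets (distr ?R ?M ?t) = sets ?M" by simp
  fix A J assume J: "finite J" "J \<subseteq> I" and A: "\<And>i. i \<in> J \<Longrightarrow> A i \<in> sets (distr (R i) (N i) (f i))"
  have "?M (prod_emb I (\<lambda>i. distr (R i) (N i) (f i)) J (Pi\<^sub>E J A)) = (\<Prod>j\<in>J. distr (R j) (N j) (f j) (A j))"
    using R f J A by (intro emeasure_PiM_emb prob_space.prob_space_distr) auto
  also have "\<dots> = (\<Prod>j\<in>J. R j (f j -` A j \<inter> space (R j)))"
    using f J A by (intro prod.cong refl emeasure_distr) auto
  also have "\<dots> = ?R (prod_emb I R J (\<Pi>\<^sub>E j\<in>J. f j -` A j \<inter> space (R j)))"
    using R f J A by (intro emeasure_PiM_emb[symmetric]) (auto intro!: measurable_sets)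
  also have "prod_emb I R J (\<Pi>\<^sub>E j\<in>J. f j -` A j \<inter> space (R j)) = ?t -` prod_emb I (\<lambda>i. distr (R i) (N i) (f i)) J (Pi\<^sub>E J A) \<inter> space ?R"
  proof -
    have JI: "\<And>i. i \<in> J \<Longrightarrow> i \<in> I" using J by auto
    have fs: "\<And>i x. i \<in> I \<Longrightarrow> x \<in> space (R i) \<Longrightarrow> f i x \<in> space (N i)"
      by (rule measurable_space[OF f])
    show ?thesis
    proof (intro set_eqI iffI)
      fix x assume "x \<in> prod_emb I R J (\<Pi>\<^sub>E j\<in>J. f j -` A j \<inter> space (R j))"
      then have x: "x \<in> (\<Pi>\<^sub>E i\<in>I. space (R i))" "\<And>j. j \<in> J \<Longrightarrow> f j (x j) \<in> A j"
        unfolding prod_emb_def by (auto simp: PiE_iff JI)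
      then show "x \<in> ?t -` prod_emb I (\<lambda>i. distr (R i) (N i) (f i)) J (Pi\<^sub>E J A) \<inter> space ?R"
        unfolding prod_emb_def by (auto simp: space_PiM PiE_iff JI fs)
    next
      fix x assume "x \<in> ?t -` prod_emb I (\<lambda>i. distr (R i) (N i) (f i)) J (Pi\<^sub>E J A) \<inter> space ?R"
      then have x: "x \<in> (\<Pi>\<^sub>E i\<in>I. space (R i))" "\<And>j. j \<in> J \<Longrightarrow> f j (x j) \<in> A j"
        unfolding prod_emb_def by (auto simp: space_PiM PiE_iff JI)
      then show "x \<in> prod_emb I R J (\<Pi>\<^sub>E j\<in>J. f j -` A j \<inter> space (R j))"
        unfolding prod_emb_def by (auto simp: PiE_iff JI)
    qed
  qed
  also have "?R \<dots> = distr ?R ?M ?t (prod_emb I (\<lambda>i. distr (R i) (N i) (f i)) J (Pi\<^sub>E J A))"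
    using tm J A by (intro emeasure_distr[symmetric] sets_PiM_I) (auto simp: Pi_iff)
  finally show "?M (prod_emb I (\<lambda>i. distr (R i) (N i) (f i)) J (Pi\<^sub>E J A)) = distr ?R ?M ?t (prod_emb I (\<lambda>i. distr (R i) (N i) (f i)) J (Pi\<^sub>E J A))" .
qed



lemma distr_pair_snd':
  assumes "prob_space M1" "prob_space M2"
  shows "distr (M1 \<Otimes>\<^sub>M M2) M2 snd = M2"
proof (intro measure_eqI)
  interpret M1: prob_space M1 by fact
  interpret M2: prob_space M2 by fact
  interpret pair_sigma_finite M1 M2 ..
  fix A assume A: "A \<in> sets (distr (M1 \<Otimes>\<^sub>M M2) M2 snd)"
  from A have "emeasure (distr (M1 \<Otimes>\<^sub>M M2) M2 snd) A = emeasure (M1 \<Otimes>\<^sub>M M2) (space M1 \<times> A)"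
    by (auto simp add: emeasure_distr space_pair_measure dest: sets.sets_into_space intro!: arg_cong2[where f=emeasure])
  moreover have "A \<in> sets M2" using A by simp
  ultimately show "emeasure (distr (M1 \<Otimes>\<^sub>M M2) M2 snd) A = emeasure M2 A"
    using M2.emeasure_pair_measure_Times[OF sets.top[of M1], of A] M1.emeasure_space_1 by simp
qed simp

lemma prob_gamma: "prob_space (gamma_measure a)"
  unfolding gamma_measure_def by (rule prob_space_erlang_density) simp

lemma sets_gamma[simp, measurable_cong]: "sets (gamma_measure a) = sets borel"
  unfolding gamma_measure_def by simp

lemma space_gamma[simp]: "space (gamma_measure a) = UNIV"
  unfolding gamma_measure_def by simp

lemma AE_gamma_nonneg: "AE x in gamma_measure a. 0 \<le> x"
  unfolding gamma_measure_def
  by (subst AE_density) (auto simp: erlang_density_def split: if_splits)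

lemma gamma_sum:
  assumes "1 \<le> a" "1 \<le> b"
  shows "distr (gamma_measure a \<Otimes>\<^sub>M gamma_measure b) borel (\<lambda>(x,y). x + y) = gamma_measure (a + b)"
proof -
  let ?M = "gamma_measure a \<Otimes>\<^sub>M gamma_measure b"
  interpret A: prob_space "gamma_measure a" by (rule prob_gamma)
  interpret B: prob_space "gamma_measure b" by (rule prob_gamma)
  interpret prob_space ?M by (intro prob_space_pair A.prob_space_axioms B.prob_space_axioms)
  have dfst: "distr ?M borel fst = gamma_measure a"
    using B.distr_pair_fst[of "gamma_measure a"] by (metis distr_cong sets_gamma)
  have dsnd: "distr ?M borel snd = gamma_measure b"
    using distr_pair_snd'[OF A.prob_space_axioms B.prob_space_axioms] by (metis distr_cong sets_gamma)
  have ind: "indep_var borel fst borel snd"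
  proof (subst indep_var_distribution_eq, intro conjI)
    show "random_variable borel fst" "random_variable borel snd"
      by (auto simp: measurable_cong_sets[OF sets_pair_measure_cong[OF sets_gamma sets_gamma] refl])
    have "distr ?M (borel \<Otimes>\<^sub>M borel) (\<lambda>x. (fst x, snd x)) = distr ?M ?M (\<lambda>x. x)"
      by (intro distr_cong) (auto intro!: sets_pair_measure_cong)
    also have "\<dots> = ?M" by (rule distr_id)
    finally show "distr ?M borel fst \<Otimes>\<^sub>M distr ?M borel snd = distr ?M (borel \<Otimes>\<^sub>M borel) (\<lambda>x. (fst x, snd x))"
      by (simp add: dfst dsnd)
  qed
  have da: "distributed ?M lborel fst (erlang_density (a - 1) 1)"
  proof -
    have "distr ?M lborel fst = distr ?M borel fst" by (rule distr_cong) auto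
    then show ?thesis
      unfolding distributed_def using dfst
      by (auto simp: gamma_measure_def measurable_cong_sets[OF sets_pair_measure_cong[OF sets_gamma sets_gamma] refl])
  qed
  have db: "distributed ?M lborel snd (erlang_density (b - 1) 1)"
  proof -
    have "distr ?M lborel snd = distr ?M borel snd" by (rule distr_cong) auto
    then show ?thesis
      unfolding distributed_def using dsnd
      by (auto simp: gamma_measure_def measurable_cong_sets[OF sets_pair_measure_cong[OF sets_gamma sets_gamma] refl])
  qed
  have "distributed ?M lborel (\<lambda>x. fst x + snd x) (erlang_density (Suc (a - 1) + Suc (b - 1) - 1) 1)"
    by (rule sum_indep_erlang[OF ind _ da db]) simp
  then have "distr ?M lborel (\<lambda>x. fst x + snd x) = gamma_measure (a + b)"
    using assms unfolding distributed_def gamma_measure_def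
    by (simp add: Suc_diff_le)
  then show ?thesis
    by (metis (no_types, lifting) case_prod_beta distr_cong sets_lborel)
qed


lemma ennreal_inverse_antimono: "(b::ennreal) \<le> b' \<Longrightarrow> inverse b' \<le> inverse b"
  unfolding less_eq_ennreal.rep_eq inverse_ennreal.rep_eq by (rule ereal_inverse_antimono[OF enn2ereal_nonneg])

lemma ennreal_divide_antimono: "(b::ennreal) \<le> b' \<Longrightarrow> a / b' \<le> a / b"
  unfolding divide_ennreal_def by (intro mult_left_mono ennreal_inverse_antimono) auto

lemma SIR_mono:
  assumes k: "k \<in> {1..K}" and Ppos: "\<forall>j\<in>{1..K}. P j > 0"
    and h: "h' (k, n) \<le> h (k, n)"
    and g: "\<forall>j\<in>{1..K}. \<forall>m. g (j, m) \<le> g' (j, m)"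
  shows "SIR K \<alpha> P c h' g' k n \<le> SIR K \<alpha> P c h g k n"
  unfolding SIR_def
proof (rule order_trans[OF divide_right_mono_ennreal ennreal_divide_antimono])
  show "ennreal (P k * h' (k, n) * norm (snd c k n) powr - \<alpha>) \<le> ennreal (P k * h (k, n) * norm (snd c k n) powr - \<alpha>)"
    using k Ppos h by (intro ennreal_leI mult_right_mono mult_left_mono) (auto simp: less_imp_le)
  show "(\<Sum>j\<in>{1..K}. \<Sum>m. ennreal (if enat m < fst c j \<and> (j, m) \<noteq> (k, n)
                                   then P j * g (j, m) * norm (snd c j m) powr (- \<alpha>) else 0))
     \<le> (\<Sum>j\<in>{1..K}. \<Sum>m. ennreal (if enat m < fst c j \<and> (j, m) \<noteq> (k, n)
                                   then P j * g' (j, m) * norm (snd c j m) powr (- \<alpha>) else 0))"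
    using Ppos g by (intro sum_mono suminf_le ennreal_leI) (auto intro!: mult_right_mono mult_left_mono)
qed

lemma rate_mono:
  assumes "s \<le> s'" "Or > 0" "rate_exceeds Or T s"
  shows "rate_exceeds Or T s'"
proof (cases "s' = \<top>")
  case True then show ?thesis by (simp add: rate_exceeds_def)
next
  case False
  then have "s \<noteq> \<top>" using assms(1) by (auto simp: top_unique)
  then have "Or * log 2 (1 + enn2real s) > T" using assms(3) by (simp add: rate_exceeds_def)
  moreover have "enn2real s \<le> enn2real s'" using assms(1) False by (intro enn2real_mono) (auto simp: less_top)
  then have "log 2 (1 + enn2real s) \<le> log 2 (1 + enn2real s')"
    using enn2real_nonneg[of s] enn2real_nonneg[of s'] by (subst log_le_cancel_iff) (auto intro: add_pos_nonneg)
  then have "Or * log 2 (1 + enn2real s) \<le> Or * log 2 (1 + enn2real s')"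
    using assms(2) by simp
  ultimately show ?thesis by (simp add: rate_exceeds_def)
qed


definition ordC :: "nat \<Rightarrow> nat \<Rightarrow> (real \<times> real) measure" where
  "ordC a b = distr (gamma_measure a \<Otimes>\<^sub>M gamma_measure (b - a)) (borel \<Otimes>\<^sub>M borel)
     (\<lambda>(x, y). (x, if a < b then x + max 0 y else x))"

definition indC :: "nat \<Rightarrow> nat \<Rightarrow> (real \<times> real) measure" where
  "indC a b = gamma_measure a \<Otimes>\<^sub>M gamma_measure b"

lemma sets_gg: "sets (gamma_measure a \<Otimes>\<^sub>M gamma_measure b) = sets (borel \<Otimes>\<^sub>M borel)"
  by (intro sets_pair_measure_cong) auto

lemma prob_gg: "prob_space (gamma_measure a \<Otimes>\<^sub>M gamma_measure b)"
  by (intro prob_space_pair prob_gamma)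

lemma ordC_map_meas: "(\<lambda>(x, y). (x, if a < b then x + max 0 y else (x::real))) \<in> measurable (gamma_measure a \<Otimes>\<^sub>M gamma_measure c) (borel \<Otimes>\<^sub>M borel)"
  unfolding measurable_cong_sets[OF sets_gg refl] by measurable

lemma prob_ordC: "prob_space (ordC a b)"
  unfolding ordC_def by (intro prob_space.prob_space_distr prob_gg ordC_map_meas)

lemma sets_ordC[simp]: "sets (ordC a b) = sets (borel \<Otimes>\<^sub>M borel)"
  unfolding ordC_def by simp

lemma prob_indC: "prob_space (indC a b)"
  unfolding indC_def by (rule prob_gg)

lemma sets_indC[simp]: "sets (indC a b) = sets (borel \<Otimes>\<^sub>M borel)"
  unfolding indC_def by (rule sets_gg)

lemma gg_fst: "distr (gamma_measure a \<Otimes>\<^sub>M gamma_measure b) borel fst = gamma_measure a"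
proof -
  interpret B: prob_space "gamma_measure b" by (rule prob_gamma)
  show ?thesis using B.distr_pair_fst[of "gamma_measure a"] by (metis distr_cong sets_gamma)
qed

lemma gg_snd: "distr (gamma_measure a \<Otimes>\<^sub>M gamma_measure b) borel snd = gamma_measure b"
  using distr_pair_snd'[OF prob_gamma prob_gamma] by (metis distr_cong sets_gamma)

lemma indC_fst: "distr (indC a b) borel fst = gamma_measure a"
  unfolding indC_def by (rule gg_fst)

lemma indC_snd: "distr (indC a b) borel snd = gamma_measure b"
  unfolding indC_def by (rule gg_snd)

lemma ordC_fst: "distr (ordC a b) borel fst = gamma_measure a"
proof -
  have "distr (ordC a b) borel fst = distr (gamma_measure a \<Otimes>\<^sub>M gamma_measure (b - a)) borel
          (fst \<circ> (\<lambda>(x, y). (x, if a < b then x + max 0 y else x)))"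
    unfolding ordC_def by (intro distr_distr ordC_map_meas) simp
  also have "\<dots> = distr (gamma_measure a \<Otimes>\<^sub>M gamma_measure (b - a)) borel fst"
    by (intro distr_cong) auto
  finally show ?thesis by (simp add: gg_fst)
qed

lemma ordC_snd:
  assumes "1 \<le> a" "a \<le> b"
  shows "distr (ordC a b) borel snd = gamma_measure b"
proof -
  have "distr (ordC a b) borel snd = distr (gamma_measure a \<Otimes>\<^sub>M gamma_measure (b - a)) borel
          (snd \<circ> (\<lambda>(x, y). (x, if a < b then x + max 0 y else x)))"
    unfolding ordC_def by (intro distr_distr ordC_map_meas) simp
  also have "\<dots> = gamma_measure b"
  proof (cases "a < b")
    case True
    have "AE z in gamma_measure a \<Otimes>\<^sub>M gamma_measure (b - a). 0 \<le> snd z"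
    proof -
      have "AE z in distr (gamma_measure a \<Otimes>\<^sub>M gamma_measure (b - a)) borel snd. 0 \<le> z"
        unfolding gg_snd by (rule AE_gamma_nonneg)
      then show ?thesis by (rule AE_distrD[rotated]) (simp add: measurable_cong_sets[OF sets_gg refl])
    qed
    then have "distr (gamma_measure a \<Otimes>\<^sub>M gamma_measure (b - a)) borel
          (snd \<circ> (\<lambda>(x, y). (x, if a < b then x + max 0 y else x)))
        = distr (gamma_measure a \<Otimes>\<^sub>M gamma_measure (b - a)) borel (\<lambda>(x, y). x + y)"
      using True by (intro distr_cong_AE) (auto simp: measurable_cong_sets[OF sets_gg refl] elim!: eventually_mono)
    also have "\<dots> = gamma_measure (a + (b - a))"
      using assms True by (intro gamma_sum) auto
    finally show ?thesis using assms by simp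
  next
    case False
    then have "b = a" using assms by simp
    have "distr (gamma_measure a \<Otimes>\<^sub>M gamma_measure (b - a)) borel
          (snd \<circ> (\<lambda>(x, y). (x, if a < b then x + max 0 y else x)))
        = distr (gamma_measure a \<Otimes>\<^sub>M gamma_measure (b - a)) borel fst"
      using False by (intro distr_cong) auto
    then show ?thesis by (simp add: gg_fst \<open>b = a\<close>)
  qed
  finally show ?thesis .
qed

lemma ordC_AE: "AE z in ordC a b. fst z \<le> snd z"
  unfolding ordC_def
  by (subst AE_distr_iff[OF ordC_map_meas]) (auto simp: split_beta)



lemma marks_coupling:
  fixes R :: "nat \<times> nat \<Rightarrow> (real \<times> real) measure"
  assumes R: "\<And>i. prob_space (R i)" "\<And>i. sets (R i) = sets (borel \<Otimes>\<^sub>M borel)"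
    and m: "\<And>k n. distr (R (k,n)) borel pr = gamma_measure (a k)"
    and pr: "pr \<in> measurable (borel \<Otimes>\<^sub>M borel) borel"
  shows "distr (PiM UNIV R) (marks_law a) (\<lambda>\<omega> i. pr (\<omega> i)) = marks_law a"
proof -
  have eq: "(\<lambda>i. distr (R i) borel pr) = (\<lambda>(k,n). gamma_measure (a k))"
    using m by (auto simp: fun_eq_iff)
  have "distr (PiM UNIV R) (PiM UNIV (\<lambda>i. distr (R i) borel pr)) (\<lambda>\<omega>. \<lambda>i\<in>UNIV. pr (\<omega> i))
      = PiM UNIV (\<lambda>i. distr (R i) borel pr)"
    by (rule distr_PiM_map) (auto simp: R measurable_cong_sets[OF R(2) refl] pr)
  then show ?thesis by (simp add: eq marks_law_def restrict_UNIV)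
qed

abbreviation "Sh \<equiv> PiM (UNIV :: (nat \<times> nat) set) (\<lambda>_. borel \<Otimes>\<^sub>M borel :: (real \<times> real) measure)"
abbreviation "Sm \<equiv> PiM (UNIV :: (nat \<times> nat) set) (\<lambda>_. borel :: real measure)"

lemma meas_pr:
  assumes "pr \<in> measurable (borel \<Otimes>\<^sub>M borel) (borel :: real measure)"
  shows "(\<lambda>\<omega> i. pr (\<omega> i)) \<in> measurable Sh Sm"
proof (rule measurable_PiM_single')
  fix i :: "nat \<times> nat"
  show "(\<lambda>\<omega>. pr (\<omega> i)) \<in> measurable Sh borel"
    using measurable_compose[OF measurable_component_singleton[of i UNIV "\<lambda>_. borel \<Otimes>\<^sub>M borel"] assms] by simp
qed (auto simp: space_PiM)

lemma sets_marks: "sets (marks_law a) = sets Sm"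
  unfolding marks_law_def by (intro sets_PiM_cong) (auto split: prod.split)

lemma prob_marks: "prob_space (marks_law a)"
  unfolding marks_law_def by (intro prob_space_PiM) (auto split: prod.split intro: prob_gamma)

lemma meas_Phi:
  assumes F: "F \<in> measurable Sh Sm" and G: "G \<in> measurable Sh Sm"
  shows "(\<lambda>(c, u, v). (c, F u, G v)) \<in> measurable (Q \<Otimes>\<^sub>M (Sh \<Otimes>\<^sub>M Sh)) (Q \<Otimes>\<^sub>M (Sm \<Otimes>\<^sub>M Sm))"
proof -
  note [measurable] = F G
  show ?thesis by measurable
qed



lemma main_mono:
  fixes K :: nat and \<alpha> :: real and P Ores T :: "nat \<Rightarrow> real"
    and Delta Psi Delta' Psi' :: "nat \<Rightarrow> nat" and Q :: "config measure" and A :: "nat set"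
  assumes pp: "point_process K Q"
    and P_pos: "\<forall>k\<in>{1..K}. P k > 0"
    and O_pos: "\<forall>k\<in>{1..K}. Ores k > 0"
    and par: "\<forall>k\<in>{1..K}. Delta k \<ge> 1 \<and> Psi k \<ge> 1 \<and> Delta' k \<ge> 1 \<and> Psi' k \<ge> 1"
    and Psi_le: "\<forall>k\<in>{1..K}. Psi k \<le> Psi' k"
    and AK: "A \<subseteq> {1..K}" and DA: "\<forall>k\<in>A. Delta' k \<le> Delta k"
  shows "rate_coverage K \<alpha> P Ores T A Q Delta' Psi' \<le> rate_coverage K \<alpha> P Ores T A Q Delta Psi"
proof -
  interpret Qp: prob_space Q using pp by (simp add: point_process_def)
  define Rh where "Rh = (\<lambda>(k::nat, n::nat). if k \<in> A then ordC (Delta' k) (Delta k) else indC (Delta' k) (Delta k))"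
  define Rg where "Rg = (\<lambda>(k::nat, n::nat). if k \<in> {1..K} then ordC (Psi k) (Psi' k) else indC (Psi k) (Psi' k))"
  have Rh_prob: "\<And>i. prob_space (Rh i)" by (auto simp: Rh_def prob_ordC prob_indC split: prod.split)
  have Rg_prob: "\<And>i. prob_space (Rg i)" by (auto simp: Rg_def prob_ordC prob_indC split: prod.split)
  have Rh_sets: "\<And>i. sets (Rh i) = sets (borel \<Otimes>\<^sub>M borel)" by (auto simp: Rh_def split: prod.split)
  have Rg_sets: "\<And>i. sets (Rg i) = sets (borel \<Otimes>\<^sub>M borel)" by (auto simp: Rg_def split: prod.split)
  have mh1: "distr (PiM UNIV Rh) (marks_law Delta') (\<lambda>\<omega> i. fst (\<omega> i)) = marks_law Delta'"
    by (rule marks_coupling[OF Rh_prob Rh_sets]) (auto simp: Rh_def ordC_fst indC_fst)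
  have mh2: "distr (PiM UNIV Rh) (marks_law Delta) (\<lambda>\<omega> i. snd (\<omega> i)) = marks_law Delta"
  proof (rule marks_coupling[OF Rh_prob Rh_sets])
    fix k n :: nat
    show "distr (Rh (k, n)) borel snd = gamma_measure (Delta k)"
    proof (cases "k \<in> A")
      case True
      then have "k \<in> {1..K}" using AK by auto
      then show ?thesis using True par DA by (simp add: Rh_def ordC_snd)
    qed (simp add: Rh_def indC_snd)
  qed simp
  have mg1: "distr (PiM UNIV Rg) (marks_law Psi) (\<lambda>\<omega> i. fst (\<omega> i)) = marks_law Psi"
    by (rule marks_coupling[OF Rg_prob Rg_sets]) (auto simp: Rg_def ordC_fst indC_fst)
  have mg2: "distr (PiM UNIV Rg) (marks_law Psi') (\<lambda>\<omega> i. snd (\<omega> i)) = marks_law Psi'"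
  proof (rule marks_coupling[OF Rg_prob Rg_sets])
    fix k n :: nat
    show "distr (Rg (k, n)) borel snd = gamma_measure (Psi' k)"
    proof (cases "k \<in> {1..K}")
      case True
      then show ?thesis using par Psi_le by (simp add: Rg_def ordC_snd)
    next
      case False then show ?thesis by (auto simp: Rg_def indC_snd)
    qed
  qed simp
  have sRh: "sets (PiM UNIV Rh) = sets Sh" by (intro sets_PiM_cong) (auto simp: Rh_sets)
  have sRg: "sets (PiM UNIV Rg) = sets Sh" by (intro sets_PiM_cong) (auto simp: Rg_sets)
  have mfst: "(\<lambda>\<omega> i. fst (\<omega> i)) \<in> measurable Sh Sm" by (rule meas_pr) simp
  have msnd: "(\<lambda>\<omega> i. snd (\<omega> i)) \<in> measurable Sh Sm" by (rule meas_pr) simp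
  interpret Ph: prob_space "PiM UNIV Rh" by (intro prob_space_PiM Rh_prob)
  interpret Pg: prob_space "PiM UNIV Rg" by (intro prob_space_PiM Rg_prob)
  define X where "X = PiM UNIV Rh \<Otimes>\<^sub>M PiM UNIV Rg"
  define Cpl where "Cpl = Q \<Otimes>\<^sub>M X"
  interpret PX: prob_space X unfolding X_def by (intro prob_space_pair Ph.prob_space_axioms Pg.prob_space_axioms)
  interpret PC: prob_space Cpl unfolding Cpl_def by (intro prob_space_pair Qp.prob_space_axioms PX.prob_space_axioms)
  have sX: "sets X = sets (Sh \<Otimes>\<^sub>M Sh)" unfolding X_def by (intro sets_pair_measure_cong sRh sRg)
  have sC: "sets Cpl = sets (Q \<Otimes>\<^sub>M (Sh \<Otimes>\<^sub>M Sh))" unfolding Cpl_def by (intro sets_pair_measure_cong sX refl)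
  have sN: "\<And>a b. sets (network_measure Q a b) = sets (Q \<Otimes>\<^sub>M (Sm \<Otimes>\<^sub>M Sm))"
    unfolding network_measure_def by (intro sets_pair_measure_cong sets_marks refl)
  define \<Phi>' where "\<Phi>' = (\<lambda>(c::config, u::nat\<times>nat\<Rightarrow>real\<times>real, v::nat\<times>nat\<Rightarrow>real\<times>real). (c, (\<lambda>i. fst (u i)), (\<lambda>i. snd (v i))))"
  define \<Phi> where "\<Phi> = (\<lambda>(c::config, u::nat\<times>nat\<Rightarrow>real\<times>real, v::nat\<times>nat\<Rightarrow>real\<times>real). (c, (\<lambda>i. snd (u i)), (\<lambda>i. fst (v i))))"
  have \<Phi>'_meas: "\<And>a b. \<Phi>' \<in> measurable Cpl (network_measure Q a b)"
    unfolding measurable_cong_sets[OF sC sN] \<Phi>'_def by (rule meas_Phi[OF mfst msnd])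
  have \<Phi>_meas: "\<And>a b. \<Phi> \<in> measurable Cpl (network_measure Q a b)"
    unfolding measurable_cong_sets[OF sC sN] \<Phi>_def by (rule meas_Phi[OF msnd mfst])
  have gen: "network_measure Q a b = distr Cpl (network_measure Q a b) (\<lambda>(c, u, v). (c, F u, G v))"
    if F: "F \<in> measurable (PiM UNIV Rh) (marks_law a)" and G: "G \<in> measurable (PiM UNIV Rg) (marks_law b)"
      and dF: "distr (PiM UNIV Rh) (marks_law a) F = marks_law a"
      and dG: "distr (PiM UNIV Rg) (marks_law b) G = marks_law b" for F G a b
  proof -
    have H: "(\<lambda>(x, y). (F x, G y)) \<in> measurable X (marks_law a \<Otimes>\<^sub>M marks_law b)"
      unfolding X_def using F G by measurable
    have sfG: "sigma_finite_measure (distr (PiM UNIV Rg) (marks_law b) G)"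
      unfolding dG by (intro prob_space_imp_sigma_finite prob_marks)
    have eq1: "distr X (marks_law a \<Otimes>\<^sub>M marks_law b) (\<lambda>(x, y). (F x, G y)) = marks_law a \<Otimes>\<^sub>M marks_law b"
      unfolding X_def using pair_measure_distr[OF F G sfG] dF dG by simp
    have sfH: "sigma_finite_measure (distr X (marks_law a \<Otimes>\<^sub>M marks_law b) (\<lambda>(x, y). (F x, G y)))"
      unfolding eq1 by (intro prob_space_imp_sigma_finite prob_space_pair prob_marks)
    have "network_measure Q a b = distr Q Q (\<lambda>x. x) \<Otimes>\<^sub>M distr X (marks_law a \<Otimes>\<^sub>M marks_law b) (\<lambda>(x, y). (F x, G y))"
      by (simp only: eq1 distr_id network_measure_def)
    also have "\<dots> = distr Cpl (network_measure Q a b) (\<lambda>(x, y). (x, (\<lambda>(x, y). (F x, G y)) y))"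
      unfolding Cpl_def network_measure_def by (rule pair_measure_distr[OF measurable_ident_sets[OF refl] H sfH])
    also have "\<dots> = distr Cpl (network_measure Q a b) (\<lambda>(c, u, v). (c, F u, G v))"
      by (intro distr_cong) auto
    finally show ?thesis .
  qed
  have N'eq: "network_measure Q Delta' Psi' = distr Cpl (network_measure Q Delta' Psi') \<Phi>'"
    unfolding \<Phi>'_def
    by (rule gen[OF _ _ mh1 mg2]) (simp_all add: measurable_cong_sets[OF sRh sets_marks] measurable_cong_sets[OF sRg sets_marks] mfst msnd)
  have Neq: "network_measure Q Delta Psi = distr Cpl (network_measure Q Delta Psi) \<Phi>"
    unfolding \<Phi>_def
    by (rule gen[OF _ _ mh2 mg1]) (simp_all add: measurable_cong_sets[OF sRh sets_marks] measurable_cong_sets[OF sRg sets_marks] mfst msnd)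
  define pred where "pred = (\<lambda>\<omega>::config \<times> (nat\<times>nat\<Rightarrow>real) \<times> (nat\<times>nat\<Rightarrow>real). \<exists>k\<in>A. \<exists>n. enat n < fst (fst \<omega>) k \<and>
             rate_exceeds (Ores k) (T k) (SIR K \<alpha> P (fst \<omega>) (fst (snd \<omega>)) (snd (snd \<omega>)) k n))"
  have spN: "space (network_measure Q Delta' Psi') = space (network_measure Q Delta Psi)"
    by (rule sets_eq_imp_space_eq) (simp add: sN)
  define E where "E = {\<omega> \<in> space (network_measure Q Delta Psi). pred \<omega>}"
  have cov': "rate_coverage K \<alpha> P Ores T A Q Delta' Psi' = measure (network_measure Q Delta' Psi') E"
    unfolding rate_coverage_def E_def pred_def spN ..
  have cov: "rate_coverage K \<alpha> P Ores T A Q Delta Psi = measure (network_measure Q Delta Psi) E"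
    unfolding rate_coverage_def E_def pred_def ..
  show ?thesis
  proof (cases "E \<in> sets (network_measure Q Delta Psi)")
    case False
    then have "E \<notin> sets (network_measure Q Delta' Psi')" using sN by simp
    then show ?thesis by (simp add: cov cov' measure_notin_sets)
  next
    case True
    then have E': "E \<in> sets (network_measure Q Delta' Psi')" using sN by simp
    have m1: "measure (network_measure Q Delta' Psi') E = measure Cpl (\<Phi>' -` E \<inter> space Cpl)"
      using arg_cong[where f="\<lambda>M. measure M E", OF N'eq] measure_distr[OF \<Phi>'_meas E'] by simp
    have m2: "measure (network_measure Q Delta Psi) E = measure Cpl (\<Phi> -` E \<inter> space Cpl)"
      using arg_cong[where f="\<lambda>M. measure M E", OF Neq] measure_distr[OF \<Phi>_meas True] by simp
    have "measure Cpl (\<Phi>' -` E \<inter> space Cpl) \<le> measure Cpl (\<Phi> -` E \<inter> space Cpl)"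
    proof (rule PC.finite_measure_mono_AE)
      show "\<Phi> -` E \<inter> space Cpl \<in> sets Cpl" using \<Phi>_meas True by (rule measurable_sets)
      have AEh: "AE u in PiM UNIV Rh. \<forall>i\<in>UNIV. fst i \<in> A \<longrightarrow> fst (u i) \<le> snd (u i)"
      proof (subst AE_ball_countable, simp, intro ballI)
        fix i :: "nat \<times> nat"
        show "AE u in PiM UNIV Rh. fst i \<in> A \<longrightarrow> fst (u i) \<le> snd (u i)"
        proof (cases "fst i \<in> A")
          case True
          then have "Rh i = ordC (Delta' (fst i)) (Delta (fst i))" by (simp add: Rh_def split_beta)
          then have "AE z in Rh i. fst z \<le> snd z" by (metis ordC_AE)
          then have "AE u in PiM UNIV Rh. fst (u i) \<le> snd (u i)"
            using AE_PiM_component[of UNIV Rh i "\<lambda>z. fst z \<le> snd z"] Rh_prob by simp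
          then show ?thesis by (auto elim: eventually_mono)
        qed simp
      qed
      have AEg: "AE u in PiM UNIV Rg. \<forall>i\<in>UNIV. fst i \<in> {1..K} \<longrightarrow> fst (u i) \<le> snd (u i)"
      proof (subst AE_ball_countable, simp, intro ballI)
        fix i :: "nat \<times> nat"
        show "AE u in PiM UNIV Rg. fst i \<in> {1..K} \<longrightarrow> fst (u i) \<le> snd (u i)"
        proof (cases "fst i \<in> {1..K}")
          case True
          then have "Rg i = ordC (Psi (fst i)) (Psi' (fst i))" by (simp add: Rg_def split_beta)
          then have "AE z in Rg i. fst z \<le> snd z" by (metis ordC_AE)
          then have "AE u in PiM UNIV Rg. fst (u i) \<le> snd (u i)"
            using AE_PiM_component[of UNIV Rg i "\<lambda>z. fst z \<le> snd z"] Rg_prob by simp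
          then show ?thesis by (auto elim: eventually_mono)
        next
          case False then show ?thesis by (intro AE_I2) (use False in auto)
        qed
      qed
      have dX1: "distr X (PiM UNIV Rh) fst = PiM UNIV Rh" unfolding X_def by (rule Pg.distr_pair_fst)
      have dX2: "distr X (PiM UNIV Rg) snd = PiM UNIV Rg"
        unfolding X_def by (rule distr_pair_snd'[OF Ph.prob_space_axioms Pg.prob_space_axioms])
      have mX1: "fst \<in> measurable X (PiM UNIV Rh)" unfolding X_def by (rule measurable_fst)
      have mX2: "snd \<in> measurable X (PiM UNIV Rg)" unfolding X_def by (rule measurable_snd)
      have AEX1: "AE w in X. \<forall>i\<in>UNIV. fst i \<in> A \<longrightarrow> fst (fst w i) \<le> snd (fst w i)"
        by (rule AE_distrD[OF mX1]) (simp only: dX1 AEh)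
      have AEX2: "AE w in X. \<forall>i\<in>UNIV. fst i \<in> {1..K} \<longrightarrow> fst (snd w i) \<le> snd (snd w i)"
        by (rule AE_distrD[OF mX2]) (simp only: dX2 AEg)
      have AEX: "AE w in X. (\<forall>i\<in>UNIV. fst i \<in> A \<longrightarrow> fst (fst w i) \<le> snd (fst w i)) \<and>
                                (\<forall>i\<in>UNIV. fst i \<in> {1..K} \<longrightarrow> fst (snd w i) \<le> snd (snd w i))"
        using AEX1 AEX2 by eventually_elim auto
      have dC: "distr Cpl X snd = X"
        unfolding Cpl_def by (rule distr_pair_snd'[OF Qp.prob_space_axioms PX.prob_space_axioms])
      have mC: "snd \<in> measurable Cpl X" unfolding Cpl_def by (rule measurable_snd)
      have AEC: "AE x in Cpl. (\<forall>i\<in>UNIV. fst i \<in> A \<longrightarrow> fst (fst (snd x) i) \<le> snd (fst (snd x) i)) \<and>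
                                (\<forall>i\<in>UNIV. fst i \<in> {1..K} \<longrightarrow> fst (snd (snd x) i) \<le> snd (snd (snd x) i))"
        by (rule AE_distrD[OF mC]) (simp only: dC AEX)
      show "AE x in Cpl. x \<in> \<Phi>' -` E \<inter> space Cpl \<longrightarrow> x \<in> \<Phi> -` E \<inter> space Cpl"
        using AEC
      proof (rule eventually_mono, intro impI)
        fix x assume ord: "(\<forall>i\<in>UNIV. fst i \<in> A \<longrightarrow> fst (fst (snd x) i) \<le> snd (fst (snd x) i)) \<and>
                                (\<forall>i\<in>UNIV. fst i \<in> {1..K} \<longrightarrow> fst (snd (snd x) i) \<le> snd (snd (snd x) i))"
          and x: "x \<in> \<Phi>' -` E \<inter> space Cpl"
        obtain c u v where xe: "x = (c, u, v)" by (cases x) auto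
        from x have sp: "x \<in> space Cpl" and Ex: "\<Phi>' x \<in> E" by auto
        have spx: "\<Phi> x \<in> space (network_measure Q Delta Psi)" using measurable_space[OF \<Phi>_meas sp] .
        from Ex obtain k n where k: "k \<in> A" "enat n < fst c k"
          and re: "rate_exceeds (Ores k) (T k) (SIR K \<alpha> P c (\<lambda>i. fst (u i)) (\<lambda>i. snd (v i)) k n)"
          by (auto simp: E_def pred_def \<Phi>'_def xe)
        have kK: "k \<in> {1..K}" using AK k by auto
        have "SIR K \<alpha> P c (\<lambda>i. fst (u i)) (\<lambda>i. snd (v i)) k n \<le> SIR K \<alpha> P c (\<lambda>i. snd (u i)) (\<lambda>i. fst (v i)) k n"
          by (rule SIR_mono[OF kK P_pos]) (use ord k xe in auto)
        then have "rate_exceeds (Ores k) (T k) (SIR K \<alpha> P c (\<lambda>i. snd (u i)) (\<lambda>i. fst (v i)) k n)"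
          using rate_mono re O_pos kK by blast
        then show "x \<in> \<Phi> -` E \<inter> space Cpl"
          using sp spx k by (auto simp: E_def pred_def \<Phi>_def xe)
      qed
    qed
    then show ?thesis by (simp add: cov cov' m1 m2)
  qed
qed


theorem theorem2:
  fixes K :: nat and \<alpha> :: real
    and P Ores T :: "nat \<Rightarrow> real"
    and Delta Psi Delta' Psi' :: "nat \<Rightarrow> nat"
    and Q :: "config measure"
  assumes pp: "point_process K Q" and stat: "stationary_pp K Q"
    and P_pos: "\<forall>k\<in>{1..K}. P k > 0"
    and O_pos: "\<forall>k\<in>{1..K}. Ores k > 0"
    and T_pos: "\<forall>k\<in>{1..K}. T k > 0"
    and par_pos: "\<forall>k\<in>{1..K}. Delta k \<ge> 1 \<and> Psi k \<ge> 1 \<and> Delta' k \<ge> 1 \<and> Psi' k \<ge> 1"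
    and Psi_le: "\<forall>k\<in>{1..K}. Psi k \<le> Psi' k"
  shows "((\<forall>k\<in>{1..K}. Delta' k \<le> Delta k) \<longrightarrow>
           open_rate_coverage K \<alpha> P Ores T Q Delta' Psi' \<le> open_rate_coverage K \<alpha> P Ores T Q Delta Psi) \<and>
         (\<forall>B. B \<subseteq> {1..K} \<longrightarrow> (\<forall>k\<in>B. Delta' k \<le> Delta k) \<longrightarrow>
           closed_rate_coverage K \<alpha> P Ores T B Q Delta' Psi' \<le> closed_rate_coverage K \<alpha> P Ores T B Q Delta Psi)"
  proof (intro conjI impI allI)
  assume "\<forall>k\<in>{1..K}. Delta' k \<le> Delta k"
  then show "open_rate_coverage K \<alpha> P Ores T Q Delta' Psi' \<le> open_rate_coverage K \<alpha> P Ores T Q Delta Psi"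
    unfolding open_rate_coverage_def
    by (intro main_mono[OF pp P_pos O_pos par_pos Psi_le]) auto
next
  fix B assume "B \<subseteq> {1..K}" "\<forall>k\<in>B. Delta' k \<le> Delta k"
  then show "closed_rate_coverage K \<alpha> P Ores T B Q Delta' Psi' \<le> closed_rate_coverage K \<alpha> P Ores T B Q Delta Psi"
    unfolding closed_rate_coverage_def
    by (intro main_mono[OF pp P_pos O_pos par_pos Psi_le])
qed

end
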